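(* Let $k\ge1$, and let $\mathcal P=\{p_1,\dots,p_{k^2}\}$ be a family of real polynomials in the commuting variables $x_1,\dots,x_{2k^2}$ admitting an nc representation $p(X,Y)$ of degree $d>1$. Suppose at least one polynomial of the family contains a term $e\,x_i^sx_j^t$ with $e\ne0$, $t\ge2$ and $s\ge t+2$. Then: (1) there is $a\in\{1,\dots,k\}$ such that one of $x_i,x_j$ is the $(a,a)$ entry of $X$ and the other is the $(a,a)$ entry of $Y$; (2) for each $n\in\{1,\dots,k\}$, letting $x_{i_n}$ be the $(n,n)$ entry of the matrix (among $X,Y$) containing $x_i$ and $x_{j_n}$ the $(n,n)$ entry of the other matrix, the polynomial in position $(n,n)$ of the array $p(X,Y)$ contains the term $e\,x_{i_n}^sx_{j_n}^t$; thus there are exactly $k$ such diagonal pairs and $k$ polynomials $p_{\ell_1},\dots,p_{\ell_k}$ with $p_{\ell_n}=e\,x_{i_n}^sx_{j_n}^t+\cdots$, each occupying the same diagonal position as $x_{i_n}$ and $x_{j_n}$.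
   Context: The family $\mathcal P$ admits an nc representation $p(X,Y)$ if there are $k\times k$ matrices $X,Y$ whose $2k^2$ entries are the variables $x_1,\dots,x_{2k^2}$, each used exactly once, and a noncommutative polynomial $p$ in two letters with real coefficients such that the matrix $p(X,Y)$ is a $k\times k$ array whose entries are $p_1,\dots,p_{k^2}$, each exactly once. A "term" means a monomial with its nonzero coefficient after collecting like terms. *)

theory Defs
  imports Complex_Main "HOL-Library.Multiset"
begin

text \<open>Commutative real polynomials in variables indexed by nat: coefficient
functions on monomials, a monomial being a multiset of variable indices.
Noncommutative polynomials in two letters: coefficient functions on words over
bool (False = letter X, True = letter Y), with finite support.
Variables are indexed 0 ..< 2k^2 and the family p_1..p_(k^2) is indexed 0 ..< k^2.
The variable placement is M :: bool => nat => nat => nat: M False r c is the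
index of the variable at entry (r,c) of X, M True r c that of Y (0-based).\<close>

type_synonym cpoly = "nat multiset \<Rightarrow> real"
type_synonym ncpoly = "bool list \<Rightarrow> real"

definition nc_support :: "ncpoly \<Rightarrow> bool list set" where
  "nc_support p = {w. p w \<noteq> 0}"

definition nc_degree :: "ncpoly \<Rightarrow> nat" where
  "nc_degree p = Max (length ` nc_support p)"

definition index_paths :: "nat \<Rightarrow> nat \<Rightarrow> nat \<Rightarrow> nat \<Rightarrow> nat list set" where
  "index_paths k m a b = {cs. length cs = Suc m \<and> hd cs = a \<and> last cs = b \<and> set cs \<subseteq> {..<k}}"

definition path_monomial :: "(bool \<Rightarrow> nat \<Rightarrow> nat \<Rightarrow> nat) \<Rightarrow> bool list \<Rightarrow> nat list \<Rightarrow> nat multiset" where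
  "path_monomial M w cs = mset (map (\<lambda>l. M (w ! l) (cs ! l) (cs ! Suc l)) [0..<length w])"

text \<open>Entry (a,b) of the matrix p(X,Y), as a commutative polynomial (coefficient function).\<close>
definition nc_entry :: "nat \<Rightarrow> (bool \<Rightarrow> nat \<Rightarrow> nat \<Rightarrow> nat) \<Rightarrow> ncpoly \<Rightarrow> nat \<Rightarrow> nat \<Rightarrow> cpoly" where
  "nc_entry k M p a b = (\<lambda>\<mu>. \<Sum>w\<in>nc_support p.
      p w * real (card {cs \<in> index_paths k (length w) a b. path_monomial M w cs = \<mu>}))"

definition nc_representation :: "nat \<Rightarrow> (nat \<Rightarrow> cpoly) \<Rightarrow> (bool \<Rightarrow> nat \<Rightarrow> nat \<Rightarrow> nat) \<Rightarrow> ncpoly \<Rightarrow> bool" where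
  "nc_representation k P M p \<longleftrightarrow>
     finite (nc_support p) \<and>
     bij_betw (\<lambda>(z, r, c). M z r c) (UNIV \<times> {..<k} \<times> {..<k}) {..<2 * k^2} \<and>
     (\<exists>\<sigma>. bij_betw \<sigma> ({..<k} \<times> {..<k}) {..<k^2} \<and>
          (\<forall>a<k. \<forall>b<k. nc_entry k M p a b = P (\<sigma> (a, b))))"

end

theory Submission
  imports Defs
begin

lemma image_mset_inj_eq:
  assumes "inj f" "image_mset f A = image_mset f B"
  shows "A = B"
proof -
  have "image_mset (inv f) (image_mset f A) = image_mset (inv f) (image_mset f B)"
    using assms(2) by simp
  thus ?thesis using assms(1) by (simp add: multiset.map_comp inv_o_cancel)
qed

lemma sum_mset_map_upt:
  "(\<Sum>l<m. \<phi> (h l) :: int) = sum_mset (image_mset \<phi> (mset (map h [0..<m])))"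
  by (induction m) auto

lemma pm_replicate:
  "path_monomial M w (replicate (Suc (length w)) n) = image_mset (\<lambda>b. M b n n) (mset w)"
proof -
  have "map (\<lambda>l. M (w!l) (replicate (Suc (length w)) n ! l) (replicate (Suc (length w)) n ! Suc l)) [0..<length w]
        = map (\<lambda>b. M b n n) w"
    by (rule nth_equalityI) (auto simp del: replicate_Suc)
  thus ?thesis unfolding path_monomial_def by (simp add: mset_map)
qed

lemma diag_count:
  assumes inj: "\<And>z r c z' r' c'. r<k \<Longrightarrow> c<k \<Longrightarrow> r'<k \<Longrightarrow> c'<k \<Longrightarrow> M z r c = M z' r' c'
                 \<Longrightarrow> z=z' \<and> r=r' \<and> c=c'"
    and n: "n < k"
  shows "card {cs \<in> index_paths k (length w) n n. path_monomial M w cs = image_mset (\<lambda>b. M b n n) W}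
         = (if mset w = W then 1 else 0)"
proof -
  let ?m = "length w"
  let ?f = "\<lambda>b. M b n n"
  have injf: "inj ?f"
  proof (rule injI)
    fix x y assume "M x n n = M y n n" thus "x = y" using inj[of n n n n x y] n by auto
  qed
  have "{cs \<in> index_paths k ?m n n. path_monomial M w cs = image_mset ?f W}
        = (if mset w = W then {replicate (Suc ?m) n} else {})"
  proof (rule set_eqI, rule iffI)
    fix cs assume cs: "cs \<in> {cs \<in> index_paths k ?m n n. path_monomial M w cs = image_mset ?f W}"
    hence len: "length cs = Suc ?m" and hd: "hd cs = n" and last: "last cs = n"
      and sub: "set cs \<subseteq> {..<k}" and pm: "path_monomial M w cs = image_mset ?f W"
      by (auto simp: index_paths_def)
    have lt: "\<And>l. l < Suc ?m \<Longrightarrow> cs ! l < k" using sub len by (metis lessThan_iff nth_mem subsetD)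
    have step: "cs ! l = n" if "l < ?m" for l
    proof -
      have "M (w!l) (cs!l) (cs!Suc l) \<in># path_monomial M w cs"
        unfolding path_monomial_def using that by auto
      then obtain b where "M (w!l) (cs!l) (cs!Suc l) = M b n n" using pm by auto
      thus ?thesis using inj[of "cs!l" "cs!Suc l" n n] lt that n by auto
    qed
    have csr: "cs = replicate (Suc ?m) n"
    proof (rule nth_equalityI)
      show "length cs = length (replicate (Suc ?m) n)" using len by simp
      fix l assume "l < length cs"
      hence "l < ?m \<or> l = ?m" using len by auto
      thus "cs ! l = replicate (Suc ?m) n ! l"
      proof
        assume "l = ?m"
        thus ?thesis using last len by (metis diff_Suc_1 last_conv_nth list.size(3) nat.distinct(1) nth_replicate lessI)
      qed (use step in \<open>auto simp del: replicate_Suc\<close>)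
    qed
    hence "image_mset ?f (mset w) = image_mset ?f W" using pm pm_replicate by metis
    hence "mset w = W" using image_mset_inj_eq[OF injf] by blast
    thus "cs \<in> (if mset w = W then {replicate (Suc ?m) n} else {})" using csr by simp
  next
    fix cs assume "cs \<in> (if mset w = W then {replicate (Suc ?m) n} else {})"
    hence "mset w = W" and csr: "cs = replicate (Suc ?m) n" by (auto split: if_splits)
    thus "cs \<in> {cs \<in> index_paths k ?m n n. path_monomial M w cs = image_mset ?f W}"
      using n pm_replicate[of M w n] by (auto simp: index_paths_def)
  qed
  thus ?thesis by simp
qed

theorem lemma2p16:
  fixes k :: nat and P :: "nat \<Rightarrow> cpoly" and M :: "bool \<Rightarrow> nat \<Rightarrow> nat \<Rightarrow> nat"
    and p :: ncpoly and l i j s t :: nat and e :: real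
  assumes "k \<ge> 1"
    and rep: "nc_representation k P M p"
    and deg: "nc_degree p > 1"
    and "l < k^2" and "i < 2 * k^2" and "j < 2 * k^2" and "i \<noteq> j"
    and "e \<noteq> 0" and "t \<ge> 2" and "s \<ge> t + 2"
    and hterm: "P l (replicate_mset s i + replicate_mset t j) = e"
  shows "\<exists>z. \<exists>a<k. M z a a = i \<and> M (\<not> z) a a = j \<and>
           (\<forall>n<k. nc_entry k M p n n (replicate_mset s (M z n n) + replicate_mset t (M (\<not> z) n n)) = e)"
proof -
  note ij = \<open>i \<noteq> j\<close>
  from rep have bijM: "bij_betw (\<lambda>(z, r, c). M z r c) (UNIV \<times> {..<k} \<times> {..<k}) {..<2 * k^2}"
    and "\<exists>\<sigma>. bij_betw \<sigma> ({..<k} \<times> {..<k}) {..<k^2} \<and>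
          (\<forall>a<k. \<forall>b<k. nc_entry k M p a b = P (\<sigma> (a, b)))"
    unfolding nc_representation_def by auto
  then obtain \<sigma> where bs: "bij_betw \<sigma> ({..<k} \<times> {..<k}) {..<k^2}"
    and ent: "\<forall>a<k. \<forall>b<k. nc_entry k M p a b = P (\<sigma> (a, b))" by blast
  have inj: "z=z' \<and> r=r' \<and> c=c'"
    if "r<k" "c<k" "r'<k" "c'<k" "M z r c = M z' r' c'" for z r c z' r' c'
    using bij_betw_imp_inj_on[OF bijM] that unfolding inj_on_def by fastforce
  have "l \<in> \<sigma> ` ({..<k} \<times> {..<k})" using bij_betw_imp_surj_on[OF bs] \<open>l < k^2\<close> by auto
  then obtain a' b' where a': "a' < k" and b': "b' < k" and l: "l = \<sigma> (a', b')" by auto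
  define \<mu> where "\<mu> = replicate_mset s i + replicate_mset t j"
  have E: "nc_entry k M p a' b' \<mu> = e" using ent a' b' l hterm \<mu>_def by simp
  hence "(\<Sum>w\<in>nc_support p. p w * real (card {cs \<in> index_paths k (length w) a' b'. path_monomial M w cs = \<mu>})) \<noteq> 0"
    using \<open>e \<noteq> 0\<close> unfolding nc_entry_def by simp
  then obtain w where "w \<in> nc_support p"
     and "p w * real (card {cs \<in> index_paths k (length w) a' b'. path_monomial M w cs = \<mu>}) \<noteq> 0"
    by (meson sum.not_neutral_contains_not_neutral)
  hence "card {cs \<in> index_paths k (length w) a' b'. path_monomial M w cs = \<mu>} \<noteq> 0" by auto
  hence "{cs \<in> index_paths k (length w) a' b'. path_monomial M w cs = \<mu>} \<noteq> {}" by (metis card.empty)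
  then obtain cs where cs: "cs \<in> index_paths k (length w) a' b'" and pm: "path_monomial M w cs = \<mu>"
    by auto
  define m where "m = length w"
  from cs have len: "length cs = Suc m" and hd: "hd cs = a'" and last: "last cs = b'"
      and sub: "set cs \<subseteq> {..<k}" by (auto simp: index_paths_def m_def)
  have lt: "\<And>l. l < Suc m \<Longrightarrow> cs ! l < k" using sub len by (metis lessThan_iff nth_mem subsetD)
  obtain z1 r1 c1 where r1: "r1 < k" and c1: "c1 < k" and i1: "M z1 r1 c1 = i"
  proof -
    have "i \<in> (\<lambda>(z, r, c). M z r c) ` (UNIV \<times> {..<k} \<times> {..<k})"
      using bij_betw_imp_surj_on[OF bijM] \<open>i < 2*k^2\<close> by auto
    thus ?thesis using that by auto
  qed
  obtain z2 r2 c2 where r2: "r2 < k" and c2: "c2 < k" and j2: "M z2 r2 c2 = j"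
  proof -
    have "j \<in> (\<lambda>(z, r, c). M z r c) ` (UNIV \<times> {..<k} \<times> {..<k})"
      using bij_betw_imp_surj_on[OF bijM] \<open>j < 2*k^2\<close> by auto
    thus ?thesis using that by auto
  qed
  define g where "g l = M (w!l) (cs!l) (cs!Suc l)" for l
  have gm: "mset (map g [0..<m]) = \<mu>" using pm unfolding path_monomial_def g_def m_def by simp
  have step: "(g l = i \<and> cs!l = r1 \<and> cs!Suc l = c1) \<or> (g l = j \<and> cs!l = r2 \<and> cs!Suc l = c2)"
    if "l < m" for l
  proof -
    have "g l \<in> set (map g [0..<m])" using that by simp
    hence "g l \<in># \<mu>" by (simp add: gm[symmetric])
    hence "g l = i \<or> g l = j" unfolding \<mu>_def by (auto split: if_splits)
    thus ?thesis
    proof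
      assume ga: "g l = i"
      hence "M (w!l) (cs!l) (cs!Suc l) = M z1 r1 c1" using i1 g_def by simp
      hence "cs!l = r1 \<and> cs!Suc l = c1" using inj[OF lt[of l] lt[of "Suc l"] r1 c1] that by auto
      thus ?thesis using ga by simp
    next
      assume ga: "g l = j"
      hence "M (w!l) (cs!l) (cs!Suc l) = M z2 r2 c2" using j2 g_def by simp
      hence "cs!l = r2 \<and> cs!Suc l = c2" using inj[OF lt[of l] lt[of "Suc l"] r2 c2] that by auto
      thus ?thesis using ga by simp
    qed
  qed
  have flow: "\<bar>int s * (of_bool (c1=v) - of_bool (r1=v)) + int t * (of_bool (c2=v) - of_bool (r2=v))\<bar> \<le> 1"
    for v
  proof -
    define \<phi> where "\<phi> x = (if x = i then of_bool (c1=v) - of_bool (r1=v)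
                         else of_bool (c2=v) - of_bool (r2=v) :: int)" for x
    have "(\<Sum>l<m. (of_bool (cs!Suc l = v) - of_bool (cs!l = v) :: int)) = (\<Sum>l<m. \<phi> (g l))"
    proof (rule sum.cong)
      fix l assume "l \<in> {..<m}"
      thus "(of_bool (cs!Suc l = v) - of_bool (cs!l = v) :: int) = \<phi> (g l)"
        using step[of l] ij unfolding \<phi>_def by auto
    qed simp
    also have "\<dots> = sum_mset (image_mset \<phi> \<mu>)" using sum_mset_map_upt gm by metis
    also have "\<dots> = int s * \<phi> i + int t * \<phi> j" unfolding \<mu>_def by simp
    finally have A: "(\<Sum>l<m. (of_bool (cs!Suc l = v) - of_bool (cs!l = v) :: int)) = int s * \<phi> i + int t * \<phi> j" .
    have "(\<Sum>l<m. (of_bool (cs!Suc l = v) - of_bool (cs!l = v) :: int)) = of_bool (cs!m = v) - of_bool (cs!0 = v)"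
      by (rule sum_lessThan_telescope)
    hence "\<bar>int s * \<phi> i + int t * \<phi> j\<bar> \<le> 1" using A by auto
    thus ?thesis unfolding \<phi>_def using ij by simp
  qed
  have rc1: "r1 = c1"
  proof (rule ccontr)
    assume "r1 \<noteq> c1"
    hence "\<bar>- int s + int t * (of_bool (c2=r1) - of_bool (r2=r1))\<bar> \<le> 1" using flow[of r1] by simp
    thus False using \<open>s \<ge> t+2\<close> by (cases "c2=r1"; cases "r2=r1"; simp)
  qed
  have rc2: "r2 = c2"
  proof (rule ccontr)
    assume "r2 \<noteq> c2"
    hence "\<bar>- int t\<bar> \<le> 1" using flow[of r2] rc1 by simp
    thus False using \<open>t \<ge> 2\<close> by simp
  qed
  have const: "cs ! l = cs ! 0" if "l \<le> m" for l
    using that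
  proof (induction l)
    case (Suc l)
    thus ?case using step[of l] rc1 rc2 by auto
  qed simp
  have "i \<in># \<mu>" using \<open>s \<ge> t+2\<close> unfolding \<mu>_def by simp
  hence "i \<in> set (map g [0..<m])" by (simp add: gm[symmetric])
  then obtain l1 where l1: "l1 < m" "g l1 = i" by auto
  have "j \<in># \<mu>" using \<open>t \<ge> 2\<close> unfolding \<mu>_def by simp
  hence "j \<in> set (map g [0..<m])" by (simp add: gm[symmetric])
  then obtain l2 where l2: "l2 < m" "g l2 = j" by auto
  have h0: "cs ! 0 = a'" using hd len by (metis hd_conv_nth list.size(3) nat.distinct(1))
  have "r1 = a'" using step[of l1] l1 const[of l1] h0 ij by auto
  have "r2 = a'" using step[of l2] l2 const[of l2] h0 ij by auto
  have "cs ! m = b'" using last len by (metis diff_Suc_1 last_conv_nth list.size(3) nat.distinct(1))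
  hence "b' = a'" using const[of m] h0 by simp
  have "z1 \<noteq> z2" using i1 j2 rc1 rc2 \<open>r1 = a'\<close> \<open>r2 = a'\<close> ij by (cases z1; cases z2; auto)
  hence z2: "z2 = (\<not> z1)" by auto
  define W where "W = replicate_mset s z1 + replicate_mset t (\<not> z1)"
  have entn: "nc_entry k M p n n (replicate_mset s (M z1 n n) + replicate_mset t (M (\<not> z1) n n))
              = (\<Sum>w\<in>nc_support p. p w * (if mset w = W then 1 else 0))" if "n < k" for n
  proof -
    have "replicate_mset s (M z1 n n) + replicate_mset t (M (\<not> z1) n n) = image_mset (\<lambda>b. M b n n) W"
      unfolding W_def by simp
    note X = this
    have dcn: "card {cs \<in> index_paths k (length w) n n. path_monomial M w cs = image_mset (\<lambda>b. M b n n) W} = (if mset w = W then 1 else 0)" for w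
      by (rule diag_count[where M=M and k=k and n=n and w=w and W=W, OF inj that], assumption+)
    have dc: "\<And>w. real (card {cs \<in> index_paths k (length w) n n. path_monomial M w cs = image_mset (\<lambda>b. M b n n) W}) = (if mset w = W then 1 else 0)"
      by (simp only: dcn) simp
    show ?thesis unfolding nc_entry_def X by (simp only: dc)
  qed
  have "\<mu> = replicate_mset s (M z1 a' a') + replicate_mset t (M (\<not> z1) a' a')"
    unfolding \<mu>_def using i1 j2 z2 rc1 rc2 \<open>r1 = a'\<close> \<open>r2 = a'\<close> by simp
  hence "(\<Sum>w\<in>nc_support p. p w * (if mset w = W then 1 else 0)) = e"
    using E \<open>b' = a'\<close> entn[OF a'] by simp
  note S = this
  have Mi: "M z1 a' a' = i" using i1 rc1 \<open>r1 = a'\<close> by simp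
  have Mj: "M (\<not> z1) a' a' = j" using j2 z2 rc2 \<open>r2 = a'\<close> by simp
  show ?thesis
  proof (intro exI[of _ z1] exI[of _ a'] conjI allI impI)
    fix n assume "n < k"
    thus "nc_entry k M p n n (replicate_mset s (M z1 n n) + replicate_mset t (M (\<not> z1) n n)) = e"
      using entn[of n] S by simp
  qed (use a' Mi Mj in auto)
qed

end
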